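(* Let $\mu$ be a valuated matroid on $[n]$. (i) Let $f=(f_1,f_2):[n]\cup\{o\}\to([n]\cup\{o\})\times\mathbb{T}$ be a map with $f_1(i)=i$ for all $i$, and assume that for every $i\in[n]$ there is $k\in K$ with $f_2(i)=\mathrm{val}(k)$. Then for the associated weakly monomial matrix $A_f$, $\overline{\operatorname{trop}}(f^{-1}(\mu))=\mathrm{val}(A_f)\odot\overline{\operatorname{trop}}(\mu)$. (ii) Conversely, if $A_f\in K^{n\times n}$ is a full-rank diagonal matrix, its associated map $f$ satisfies $\overline{\operatorname{trop}}(f^{-1}(\mu))=\mathrm{val}(A_f)\odot\overline{\operatorname{trop}}(\mu)$.
   Context: $K$ is a field with non-Archimedean valuation $\mathrm{val}:K\to\mathbb{T}=\mathbb{R}\cup\{\infty\}$; $(\mathrm{val}(M)\odot v)_i=\min_j(\mathrm{val}(M_{ij})+v_j)$, applied pointwise to sets. Valuated matroid of rank $r$ on finite $E$: $\nu:\binom{E}{r}\to\mathbb{T}$, not identically $\infty$, with exchange property (for all $I,J$, $i\in I\setminus J$ there is $j\in J\setminus I$ with $\nu(I)+\nu(J)\ge\nu((I\setminus i)\cup j)+\nu((J\setminus j)\cup i)$), up to additive constants; $\overline{\operatorname{trop}}(\nu)\subseteq\mathbb{P}(\mathbb{T}^E)$ is the set of $x$ with $\min_e(C_\nu(I)_e+x_e)$ attained at least twice for all $I\in\binom{E}{r+1}$ with $C_\nu(I)\ne(\infty,\dots)$, where $C_\nu(I)_e=\nu(I\setminus e)$ for $e\in I$, $\infty$ else. Pointed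 matroid $\mu_o$: $\mu$ extended to $[n]\cup\{o\}$ with $o$ a loop. With $S=f_1([n]\cup\{o\})$, $f^{-1}(\mu)(B)=\mu_o|_S(f_1(B))+\sum_{i\in B}f_2(i)$ where $\mu_o|_S$ is the restriction of $\mu_o$ to $S$ and $|B|$ equals its rank; $\overline{\operatorname{trop}}(f^{-1}(\mu))$ denotes the projection to the coordinates in $[n]$ of its tropical linear space. Associated matrix of $f$: $(A_f)_{ij}=k_i$ if $f_1(i)=j\in[n]$ with $\mathrm{val}(k_i)=f_2(i)$, and $0$ otherwise. Associated map of a weakly monomial matrix $M$ (at most one nonzero entry per row): $f(o)=(o,\infty)$; $f(i)=(o,\infty)$ if row $i$ is zero; $f(i)=(j,\mathrm{val}(M_{ij}))$ if $M_{ij}\ne0$. *)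

theory Defs
  imports "HOL-Library.Extended_Real"
begin

text \<open>Tropical numbers T = R \<union> {\<infinity>} are modelled by ereal values different from -\<infinity>.
  The ground set [n] is {1..n}; the extra point o is the natural number 0,
  so [n] \<union> {o} = {0..n}.  Vectors in T^E are functions nat \<Rightarrow> ereal that
  are \<infinity> outside E.  Tropical linear spaces are taken affinely (as cones in T^E,
  closed under adding real constants, containing the all-\<infinity> vector) instead of
  in the projective space.\<close>

definition nonarch_valuation :: "('k::field \<Rightarrow> ereal) \<Rightarrow> bool" where
  "nonarch_valuation val \<longleftrightarrow>
     val 0 = \<infinity> \<and>
     (\<forall>x. x \<noteq> 0 \<longrightarrow> (\<exists>c::real. val x = ereal c)) \<and>
     (\<forall>x y. val (x * y) = val x + val y) \<and>
     (\<forall>x y. min (val x) (val y) \<le> val (x + y))"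

definition valuated_matroid :: "nat set \<Rightarrow> nat \<Rightarrow> (nat set \<Rightarrow> ereal) \<Rightarrow> bool" where
  "valuated_matroid E r \<nu> \<longleftrightarrow>
     finite E \<and>
     (\<forall>B. B \<subseteq> E \<and> card B = r \<longrightarrow> \<nu> B \<noteq> -\<infinity>) \<and>
     (\<exists>B. B \<subseteq> E \<and> card B = r \<and> \<nu> B \<noteq> \<infinity>) \<and>
     (\<forall>I J. I \<subseteq> E \<and> card I = r \<and> J \<subseteq> E \<and> card J = r \<longrightarrow>
        (\<forall>i\<in>I - J. \<exists>j\<in>J - I.
           \<nu> (insert j (I - {i})) + \<nu> (insert i (J - {j})) \<le> \<nu> I + \<nu> J))"

definition min_twice :: "nat set \<Rightarrow> (nat \<Rightarrow> ereal) \<Rightarrow> bool" where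
  "min_twice I g \<longleftrightarrow> (\<forall>e\<in>I. g e = \<infinity>) \<or>
     (\<exists>e1\<in>I. \<exists>e2\<in>I. e1 \<noteq> e2 \<and> g e1 = g e2 \<and> (\<forall>e\<in>I. g e1 \<le> g e))"

text \<open>Tropical linear space of \<nu> (rank r on E), affine version.
  C_\<nu>(I)_e = \<nu>(I - e) for e \<in> I and \<infinity> otherwise; entries outside I do not
  affect the minimum.\<close>
definition trop :: "nat set \<Rightarrow> nat \<Rightarrow> (nat set \<Rightarrow> ereal) \<Rightarrow> (nat \<Rightarrow> ereal) set" where
  "trop E r \<nu> = {x. (\<forall>e. x e \<noteq> -\<infinity>) \<and> (\<forall>e. e \<notin> E \<longrightarrow> x e = \<infinity>) \<and>
      (\<forall>I. I \<subseteq> E \<and> card I = Suc r \<and> (\<exists>e\<in>I. \<nu> (I - {e}) \<noteq> \<infinity>) \<longrightarrow>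
           min_twice I (\<lambda>e. \<nu> (I - {e}) + x e))}"

definition pointed :: "(nat set \<Rightarrow> ereal) \<Rightarrow> nat set \<Rightarrow> ereal" where
  "pointed \<mu> B = (if 0 \<in> B then \<infinity> else \<mu> B)"

text \<open>Pullback f^{-1}(\<mu>)(B) = \<mu>_o|_S(f_1(B)) + \<Sum>_{i\<in>B} f_2(i).  This is the
  formula for the case S = f_1({0..n}) = {0..n} (so \<mu>_o|_S = \<mu>_o, of rank r),
  which is the only case used below (f_1 = id); f_1(B) must then be an r-set.\<close>
definition pullback :: "nat \<Rightarrow> (nat set \<Rightarrow> ereal) \<Rightarrow> (nat \<Rightarrow> nat \<times> ereal) \<Rightarrow> nat set \<Rightarrow> ereal" where
  "pullback n \<mu> f B =
     (if inj_on (fst \<circ> f) B \<and> (fst \<circ> f) ` B \<subseteq> {0..n} then pointed \<mu> ((fst \<circ> f) ` B) else \<infinity>)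
     + (\<Sum>i\<in>B. snd (f i))"

definition proj_n :: "nat \<Rightarrow> (nat \<Rightarrow> ereal) \<Rightarrow> (nat \<Rightarrow> ereal)" where
  "proj_n n x = (\<lambda>e. if e \<in> {1..n} then x e else \<infinity>)"

definition trop_act :: "nat \<Rightarrow> ('k \<Rightarrow> ereal) \<Rightarrow> (nat \<Rightarrow> nat \<Rightarrow> 'k) \<Rightarrow> (nat \<Rightarrow> ereal) \<Rightarrow> (nat \<Rightarrow> ereal)" where
  "trop_act n val M v = (\<lambda>i. if i \<in> {1..n} then (INF j\<in>{1..n}. val (M i j) + v j) else \<infinity>)"

definition associated_matrix :: "nat \<Rightarrow> ('k::zero \<Rightarrow> ereal) \<Rightarrow> (nat \<Rightarrow> nat \<times> ereal) \<Rightarrow> (nat \<Rightarrow> nat \<Rightarrow> 'k) \<Rightarrow> bool" where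
  "associated_matrix n val f A \<longleftrightarrow>
     (\<forall>i\<in>{1..n}. \<forall>j\<in>{1..n}. j \<noteq> fst (f i) \<longrightarrow> A i j = 0) \<and>
     (\<forall>i\<in>{1..n}. fst (f i) \<in> {1..n} \<longrightarrow> val (A i (fst (f i))) = snd (f i))"

definition weakly_monomial :: "nat \<Rightarrow> (nat \<Rightarrow> nat \<Rightarrow> 'k::zero) \<Rightarrow> bool" where
  "weakly_monomial n M \<longleftrightarrow>
     (\<forall>i\<in>{1..n}. \<forall>j\<in>{1..n}. \<forall>j'\<in>{1..n}. M i j \<noteq> 0 \<and> M i j' \<noteq> 0 \<longrightarrow> j = j')"

definition associated_map :: "nat \<Rightarrow> ('k::zero \<Rightarrow> ereal) \<Rightarrow> (nat \<Rightarrow> nat \<Rightarrow> 'k) \<Rightarrow> nat \<Rightarrow> nat \<times> ereal" where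
  "associated_map n val M i =
     (if i \<in> {1..n} \<and> (\<exists>j\<in>{1..n}. M i j \<noteq> 0)
      then (let j = (THE j. j \<in> {1..n} \<and> M i j \<noteq> 0) in (j, val (M i j)))
      else (0, \<infinity>))"

definition full_rank_diagonal :: "nat \<Rightarrow> (nat \<Rightarrow> nat \<Rightarrow> 'k::zero) \<Rightarrow> bool" where
  "full_rank_diagonal n M \<longleftrightarrow>
     (\<forall>i\<in>{1..n}. \<forall>j\<in>{1..n}. i \<noteq> j \<longrightarrow> M i j = 0) \<and> (\<forall>i\<in>{1..n}. M i i \<noteq> 0)"

end

theory Submission
  imports Defs
begin


definition FB :: "nat set \<Rightarrow> nat \<Rightarrow> (nat set \<Rightarrow> ereal) \<Rightarrow> nat set set" where
  "FB E r \<mu> = {B. B \<subseteq> E \<and> card B = r \<and> \<mu> B \<noteq> \<infinity>}"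
definition zc :: "(nat \<Rightarrow> ereal) \<Rightarrow> nat set \<Rightarrow> nat" where
  "zc x B = card {e\<in>B. x e = \<infinity>}"
definition kmax :: "nat set \<Rightarrow> nat \<Rightarrow> (nat set \<Rightarrow> ereal) \<Rightarrow> (nat \<Rightarrow> ereal) \<Rightarrow> nat" where
  "kmax E r \<mu> x = Max (zc x ` FB E r \<mu>)"
definition phi :: "(nat set \<Rightarrow> ereal) \<Rightarrow> (nat \<Rightarrow> ereal) \<Rightarrow> nat set \<Rightarrow> real" where
  "phi \<mu> x B = real_of_ereal (\<mu> B) - (\<Sum>e\<in>{e\<in>B. x e \<noteq> \<infinity>}. real_of_ereal (x e))"
definition opt :: "nat set \<Rightarrow> nat \<Rightarrow> (nat set \<Rightarrow> ereal) \<Rightarrow> (nat \<Rightarrow> ereal) \<Rightarrow> nat set \<Rightarrow> bool" where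
  "opt E r \<mu> x B \<longleftrightarrow> B \<in> FB E r \<mu> \<and> zc x B = kmax E r \<mu> x \<and>
     (\<forall>B'\<in>FB E r \<mu>. zc x B' = kmax E r \<mu> x \<longrightarrow> phi \<mu> x B \<le> phi \<mu> x B')"
definition exch :: "nat set \<Rightarrow> nat \<Rightarrow> (nat set \<Rightarrow> ereal) \<Rightarrow> bool" where
  "exch E r \<mu> \<longleftrightarrow> (\<forall>I J. I \<subseteq> E \<and> card I = r \<and> J \<subseteq> E \<and> card J = r \<longrightarrow>
        (\<forall>i\<in>I - J. \<exists>j\<in>J - I.
           \<mu> (insert j (I - {i})) + \<mu> (insert i (J - {j})) \<le> \<mu> I + \<mu> J))"
definition ninf :: "nat set \<Rightarrow> nat \<Rightarrow> (nat set \<Rightarrow> ereal) \<Rightarrow> bool" where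
  "ninf E r \<mu> \<longleftrightarrow> (\<forall>B. B \<subseteq> E \<and> card B = r \<longrightarrow> \<mu> B \<noteq> -\<infinity>)"

lemma exch_mono: "exch E r \<mu> \<Longrightarrow> E' \<subseteq> E \<Longrightarrow> exch E' r \<mu>"
  unfolding exch_def by (metis (no_types, lifting) subset_trans)
lemma ninf_mono: "ninf E r \<mu> \<Longrightarrow> E' \<subseteq> E \<Longrightarrow> ninf E' r \<mu>"
  unfolding ninf_def by (metis subset_trans)

lemma FB_finite: "finite E \<Longrightarrow> finite (FB E r \<mu>)"
  by (rule finite_subset[of _ "Pow E"]) (auto simp: FB_def)

lemma zc_le_kmax: "finite E \<Longrightarrow> B \<in> FB E r \<mu> \<Longrightarrow> zc x B \<le> kmax E r \<mu> x"
  unfolding kmax_def by (rule Max_ge) (simp_all add: FB_finite)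

lemma kmax_attained: "finite E \<Longrightarrow> FB E r \<mu> \<noteq> {} \<Longrightarrow> \<exists>B\<in>FB E r \<mu>. zc x B = kmax E r \<mu> x"
proof -
  assume a: "finite E" "FB E r \<mu> \<noteq> {}"
  have "Max (zc x ` FB E r \<mu>) \<in> zc x ` FB E r \<mu>"
    by (rule Max_in) (simp_all add: FB_finite[OF a(1)] a(2))
  then obtain B where "B \<in> FB E r \<mu>" "Max (zc x ` FB E r \<mu>) = zc x B" by (rule imageE)
  then show ?thesis unfolding kmax_def by metis
qed

lemma kmax_eqI: "finite E \<Longrightarrow> B \<in> FB E r \<mu> \<Longrightarrow> zc x B = k \<Longrightarrow> (\<forall>B'\<in>FB E r \<mu>. zc x B' \<le> k)
  \<Longrightarrow> kmax E r \<mu> x = k"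
  unfolding kmax_def
proof (rule Max_eqI)
  assume a: "finite E" "B \<in> FB E r \<mu>" "zc x B = k" "\<forall>B'\<in>FB E r \<mu>. zc x B' \<le> k"
  show "finite (zc x ` FB E r \<mu>)" using FB_finite[OF a(1)] by simp
  show "\<And>y. y \<in> zc x ` FB E r \<mu> \<Longrightarrow> y \<le> k" using a(4) by blast
  show "k \<in> zc x ` FB E r \<mu>" using a(2,3) by blast
qed

lemma opt_exists:
  assumes "finite E" "FB E r \<mu> \<noteq> {}"
  shows "\<exists>B. opt E r \<mu> x B"
proof -
  let ?C = "{B\<in>FB E r \<mu>. zc x B = kmax E r \<mu> x}"
  have fC: "finite ?C" using FB_finite[OF assms(1)] by simp
  have nC: "?C \<noteq> {}" using kmax_attained[OF assms] by blast
  have "Min (phi \<mu> x ` ?C) \<in> phi \<mu> x ` ?C" using fC nC by (intro Min_in) auto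
  then obtain B where B: "B \<in> ?C" "phi \<mu> x B = Min (phi \<mu> x ` ?C)"
    by (metis (no_types, lifting) imageE)
  have "\<forall>B'\<in>?C. phi \<mu> x B \<le> phi \<mu> x B'" using B(2) fC by simp
  then show ?thesis using B(1) unfolding opt_def by blast
qed

lemma zc_swap_ff:
  assumes "e \<in> B" "j \<notin> B" "x e \<noteq> \<infinity>" "x j \<noteq> \<infinity>"
  shows "zc x (insert j (B - {e})) = zc x B"
proof -
  have "{e'\<in>insert j (B - {e}). x e' = \<infinity>} = {e'\<in>B. x e' = \<infinity>}" using assms by auto
  then show ?thesis unfolding zc_def by simp
qed

lemma zc_swap_fi:
  assumes "finite B" "e \<in> B" "j \<notin> B" "x e \<noteq> \<infinity>" "x j = \<infinity>"
  shows "zc x (insert j (B - {e})) = zc x B + 1"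
proof -
  have "{e'\<in>insert j (B - {e}). x e' = \<infinity>} = insert j {e'\<in>B. x e' = \<infinity>}" using assms by auto
  then show ?thesis unfolding zc_def using assms by simp
qed

lemma phi_swap:
  assumes "finite B" "e \<in> B" "j \<notin> B" "x e \<noteq> \<infinity>" "x j \<noteq> \<infinity>"
  shows "phi \<mu> x (insert j (B - {e})) - real_of_ereal (\<mu> (insert j (B - {e})))
       = phi \<mu> x B - real_of_ereal (\<mu> B) + real_of_ereal (x e) - real_of_ereal (x j)"
proof -
  let ?P = "{e'\<in>B. x e' \<noteq> \<infinity>}"
  have P: "{e'\<in>insert j (B - {e}). x e' \<noteq> \<infinity>} = insert j (?P - {e})" using assms by auto
  have fP: "finite ?P" using assms by simp
  have "(\<Sum>e'\<in>insert j (?P - {e}). real_of_ereal (x e')) = real_of_ereal (x j) + (\<Sum>e'\<in>?P - {e}. real_of_ereal (x e'))"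
    using fP assms by (simp add: sum.insert)
  also have "(\<Sum>e'\<in>?P - {e}. real_of_ereal (x e')) = (\<Sum>e'\<in>?P. real_of_ereal (x e')) - real_of_ereal (x e)"
    using fP assms by (simp add: sum_diff1)
  finally show ?thesis unfolding phi_def P by simp
qed

lemma ereal_fin: "(y::ereal) \<noteq> \<infinity> \<Longrightarrow> y \<noteq> -\<infinity> \<Longrightarrow> y = ereal (real_of_ereal y)"
  by (cases y) auto

lemma min_twice_shift:
  assumes "min_twice I g" "\<forall>e\<in>I. h e = g e + ereal c"
  shows "min_twice I h"
proof -
  have h: "\<And>e. e \<in> I \<Longrightarrow> h e = g e + ereal c" using assms(2) by simp
  show ?thesis
  proof (cases "\<forall>e\<in>I. g e = \<infinity>")
    case True then show ?thesis unfolding min_twice_def using h by simp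
  next
    case False
    then obtain e1 e2 where "e1 \<in> I" "e2 \<in> I" "e1 \<noteq> e2" "g e1 = g e2" "\<forall>e\<in>I. g e1 \<le> g e"
      using assms(1) unfolding min_twice_def by blast
    then show ?thesis unfolding min_twice_def using h by (metis add_right_mono)
  qed
qed

lemma exch_use:
  assumes "exch E r \<mu>" "I \<subseteq> E" "card I = r" "J \<subseteq> E" "card J = r" "i \<in> I" "i \<notin> J"
  shows "\<exists>j\<in>J - I. \<mu> (insert j (I - {i})) + \<mu> (insert i (J - {j})) \<le> \<mu> I + \<mu> J"
proof -
  have "\<forall>i\<in>I - J. \<exists>j\<in>J - I. \<mu> (insert j (I - {i})) + \<mu> (insert i (J - {j})) \<le> \<mu> I + \<mu> J"
    using assms(1-5) unfolding exch_def by blast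
  then show ?thesis using assms(6,7) by blast
qed

lemma card_swap: "finite B \<Longrightarrow> e \<in> B \<Longrightarrow> j \<notin> B \<Longrightarrow> card (insert j (B - {e})) = card B"
proof -
  assume a: "finite B" "e \<in> B" "j \<notin> B"
  have "card (insert j (B - {e})) = Suc (card (B - {e}))" using a by simp
  also have "\<dots> = card B" using a card_Suc_Diff1 by metis
  finally show ?thesis .
qed

lemma le_not_inf: "(a::ereal) \<le> b \<Longrightarrow> b \<noteq> \<infinity> \<Longrightarrow> a \<noteq> \<infinity>"
  by auto

lemma trop_cond:
  assumes "x \<in> trop E r \<mu>" "I \<subseteq> E" "card I = Suc r" "e \<in> I" "\<mu> (I - {e}) \<noteq> \<infinity>"
  shows "min_twice I (\<lambda>e. \<mu> (I - {e}) + x e)"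
proof -
  have "\<forall>I. I \<subseteq> E \<and> card I = Suc r \<and> (\<exists>e\<in>I. \<mu> (I - {e}) \<noteq> \<infinity>) \<longrightarrow>
           min_twice I (\<lambda>e. \<mu> (I - {e}) + x e)" using assms(1) unfolding trop_def by blast
  then show ?thesis using assms(2-5) by blast
qed

lemma min_twiceI: "e1 \<in> I \<Longrightarrow> e2 \<in> I \<Longrightarrow> e1 \<noteq> e2 \<Longrightarrow> g e1 = g e2 \<Longrightarrow> (\<forall>e\<in>I. g e1 \<le> g e) \<Longrightarrow> min_twice I g"
  unfolding min_twice_def by blast

lemma trop_if_cover:
  assumes finE: "finite E" and ex: "exch E r \<mu>" and ni: "ninf E r \<mu>"
    and xn: "\<forall>e. x e \<noteq> -\<infinity>" and xo: "\<forall>e. e \<notin> E \<longrightarrow> x e = \<infinity>"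
    and cov: "\<forall>e\<in>E. x e \<noteq> \<infinity> \<longrightarrow> (\<exists>B. opt E r \<mu> x B \<and> e \<in> B)"
  shows "x \<in> trop E r \<mu>"
  unfolding trop_def
proof (intro CollectI conjI allI impI)
  fix e show "x e \<noteq> -\<infinity>" using xn by simp
next
  fix e assume "e \<notin> E" then show "x e = \<infinity>" using xo by simp
next
  fix I assume I: "I \<subseteq> E \<and> card I = Suc r \<and> (\<exists>e\<in>I. \<mu> (I - {e}) \<noteq> \<infinity>)"
  define g where "g e = \<mu> (I - {e}) + x e" for e
  have fI: "finite I" using finite_subset[OF conjunct1[OF I] finE] .
  have nI: "I \<noteq> {}" using I by auto
  have cardI: "\<And>e. e \<in> I \<Longrightarrow> card (I - {e}) = r" using I fI by simp
  have nI2: "\<And>e. e \<in> I \<Longrightarrow> \<mu> (I - {e}) \<noteq> -\<infinity>"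
  proof -
    fix e assume e: "e \<in> I"
    have "I - {e} \<subseteq> E" using I by auto
    then show "\<mu> (I - {e}) \<noteq> -\<infinity>" using ni cardI[OF e] unfolding ninf_def by simp
  qed
  show "min_twice I (\<lambda>e. \<mu> (I - {e}) + x e)"
  proof (cases "\<forall>e\<in>I. g e = \<infinity>")
    case True then show ?thesis unfolding min_twice_def g_def by simp
  next
    case False
    then obtain e' where e': "e' \<in> I" "g e' \<noteq> \<infinity>" by blast
    have "Min (g ` I) \<in> g ` I" using fI nI by (intro Min_in) auto
    then obtain e0 where e0: "e0 \<in> I" "g e0 = Min (g ` I)" by (metis imageE)
    have e0min: "\<forall>e\<in>I. g e0 \<le> g e" using e0 fI by simp
    have "g e0 \<le> g e'" using e0min e'(1) by blast
    then have ge0: "g e0 \<noteq> \<infinity>" using e'(2) by (rule le_not_inf)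
    have m0: "\<mu> (I - {e0}) \<noteq> \<infinity>" and x0: "x e0 \<noteq> \<infinity>" using ge0 unfolding g_def by auto
    have "\<exists>e1\<in>I. e1 \<noteq> e0 \<and> g e1 = g e0"
    proof (rule ccontr)
      assume H: "\<not> ?thesis"
      have Hlt: "\<And>e. e \<in> I \<Longrightarrow> e \<noteq> e0 \<Longrightarrow> g e0 < g e"
      proof -
        fix e assume "e \<in> I" "e \<noteq> e0"
        then have "g e0 \<le> g e" "g e \<noteq> g e0" using H e0min by auto
        then show "g e0 < g e" by simp
      qed
      obtain Bs where Bs: "opt E r \<mu> x Bs" "e0 \<in> Bs" using cov x0 e0 I by blast
      have BsF: "Bs \<in> FB E r \<mu>" using Bs unfolding opt_def by simp
      have "Bs \<subseteq> E" using BsF unfolding FB_def by simp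
      then have fBs: "finite Bs" using finite_subset finE by auto
      let ?B0 = "I - {e0}"
      have B0E: "?B0 \<subseteq> E" "card ?B0 = r" using I cardI e0 by auto
      have "Bs \<subseteq> E" "card Bs = r" using BsF unfolding FB_def by auto
      then obtain j where j: "j \<in> ?B0 - Bs"
        and jex: "\<mu> (insert j (Bs - {e0})) + \<mu> (insert e0 (?B0 - {j})) \<le> \<mu> Bs + \<mu> ?B0"
        using exch_use[OF ex _ _ B0E Bs(2)] by blast
      have jI: "j \<in> I" "j \<noteq> e0" "j \<notin> Bs" using j by auto
      have eqI: "insert e0 (?B0 - {j}) = I - {j}" using jI e0 by auto
      let ?B2 = "insert j (Bs - {e0})"
      have B2E: "?B2 \<subseteq> E" "card ?B2 = r" using BsF jI I Bs(2) card_swap[OF fBs Bs(2) jI(3)] unfolding FB_def by auto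
      have mBs: "\<mu> Bs \<noteq> \<infinity>" "\<mu> Bs \<noteq> -\<infinity>" using BsF ni unfolding FB_def ninf_def by auto
      have mB0: "\<mu> ?B0 \<noteq> -\<infinity>" using nI2 e0 by simp
      have rhs: "\<mu> Bs + \<mu> ?B0 \<noteq> \<infinity>" using mBs m0 mB0 by (cases "\<mu> Bs"; cases "\<mu> ?B0") auto
      have mB2: "\<mu> ?B2 \<noteq> \<infinity>"
      proof
        assume "\<mu> ?B2 = \<infinity>" then show False using jex rhs by simp
      qed
      have mB2': "\<mu> ?B2 \<noteq> -\<infinity>" using B2E ni unfolding ninf_def by auto
      have mIj: "\<mu> (I - {j}) \<noteq> \<infinity>"
      proof
        assume "\<mu> (I - {j}) = \<infinity>" then show False using jex rhs eqI by simp
      qed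
      have mIj': "\<mu> (I - {j}) \<noteq> -\<infinity>" using nI2 jI by simp
      have B2F: "?B2 \<in> FB E r \<mu>" using B2E mB2 unfolding FB_def by simp
      show False
      proof (cases "x j = \<infinity>")
        case True
        have "zc x ?B2 = zc x Bs + 1" using zc_swap_fi[OF fBs Bs(2) jI(3) x0 True] .
        moreover have "zc x ?B2 \<le> kmax E r \<mu> x" using zc_le_kmax[OF finE B2F] .
        ultimately show False using Bs(1) unfolding opt_def by simp
      next
        case False
        have "zc x ?B2 = zc x Bs" using zc_swap_ff[OF Bs(2) jI(3) x0 False] .
        then have le: "phi \<mu> x Bs \<le> phi \<mu> x ?B2" using Bs(1) B2F unfolding opt_def by simp
        have sw: "phi \<mu> x ?B2 - real_of_ereal (\<mu> ?B2) = phi \<mu> x Bs - real_of_ereal (\<mu> Bs)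
           + real_of_ereal (x e0) - real_of_ereal (x j)" using phi_swap[OF fBs Bs(2) jI(3) x0 False] .
        obtain a where a: "\<mu> Bs = ereal a" using mBs by (cases "\<mu> Bs") auto
        obtain b where b: "\<mu> ?B0 = ereal b" using m0 mB0 by (cases "\<mu> ?B0") auto
        obtain c where c: "\<mu> ?B2 = ereal c" using mB2 mB2' by (cases "\<mu> ?B2") auto
        obtain d where d: "\<mu> (I - {j}) = ereal d" using mIj mIj' by (cases "\<mu> (I - {j})") auto
        obtain xe where xe: "x e0 = ereal xe" using x0 xn by (cases "x e0") auto
        obtain xj where xj: "x j = ereal xj" using False xn by (cases "x j") auto
        have "g e0 < g j" using Hlt jI by simp
        then have i1: "b + xe < d + xj" unfolding g_def using b d xe xj by simp
        have i2: "c + d \<le> a + b" using jex a b c d eqI by simp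
        have i3: "a \<le> c + xe - xj" using le sw a c xe xj by simp
        show False using i1 i2 i3 by linarith
      qed
    qed
    then obtain e1 where e1: "e1 \<in> I" "e1 \<noteq> e0" "g e1 = g e0" by blast
    have "min_twice I g"
      by (rule min_twiceI[OF e0(1) e1(1)]) (use e1 e0min in auto)
    moreover have "g = (\<lambda>e. \<mu> (I - {e}) + x e)" using g_def by (intro ext) simp
    ultimately show ?thesis by simp
  qed
qed

lemma cover_if_trop:
  assumes finE: "finite E" and ni: "ninf E r \<mu>" and xt: "x \<in> trop E r \<mu>"
    and FBne: "FB E r \<mu> \<noteq> {}" and e0: "e0 \<in> E" "x e0 \<noteq> \<infinity>"
  shows "\<exists>B. opt E r \<mu> x B \<and> e0 \<in> B"
proof (rule ccontr)
  assume H: "\<not> ?thesis"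
  obtain B where B: "opt E r \<mu> x B" using opt_exists[OF finE FBne] by blast
  have BF: "B \<in> FB E r \<mu>" using B unfolding opt_def by simp
  have e0B: "e0 \<notin> B" using H B by blast
  have "B \<subseteq> E" using BF unfolding FB_def by simp
  then have fB: "finite B" using finite_subset finE by auto
  have BE: "B \<subseteq> E" "card B = r" "\<mu> B \<noteq> \<infinity>" using BF unfolding FB_def by auto
  have mB': "\<mu> B \<noteq> -\<infinity>" using BE ni unfolding ninf_def by auto
  have xn: "\<forall>e. x e \<noteq> -\<infinity>" using xt unfolding trop_def by simp
  let ?I = "insert e0 B"
  have IE: "?I \<subseteq> E" "card ?I = Suc r" using BE e0 e0B fB by auto
  have IB: "?I - {e0} = B" using e0B by auto
  define g where "g e = \<mu> (?I - {e}) + x e" for e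
  have mt: "min_twice ?I g"
    unfolding g_def using trop_cond[OF xt IE(1) IE(2) insertI1] IB BE(3) by simp
  have ge0: "g e0 \<noteq> \<infinity>" unfolding g_def IB using BE(3) e0(2) mB' xn
    by (cases "\<mu> B"; cases "x e0") auto
  obtain e where e: "e \<in> ?I" "e \<noteq> e0" "g e \<le> g e0"
  proof -
    have "\<not> (\<forall>e\<in>?I. g e = \<infinity>)" using ge0 by auto
    then obtain e1 e2 where "e1 \<in> ?I" "e2 \<in> ?I" "e1 \<noteq> e2" "g e1 = g e2" "\<forall>e\<in>?I. g e1 \<le> g e"
      using mt unfolding min_twice_def by blast
    then show ?thesis using that[of e1] that[of e2] by force
  qed
  have eB: "e \<in> B" using e by auto
  have ge: "g e \<noteq> \<infinity>" using e(3) ge0 by (rule le_not_inf)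
  let ?B2 = "insert e0 (B - {e})"
  have IeB2: "?I - {e} = ?B2" using e by auto
  have mB2: "\<mu> ?B2 \<noteq> \<infinity>" and xe: "x e \<noteq> \<infinity>" using ge unfolding g_def IeB2 by auto
  have B2E: "?B2 \<subseteq> E" "card ?B2 = r" using BE e0 eB card_swap[OF fB eB e0B] by auto
  have mB2': "\<mu> ?B2 \<noteq> -\<infinity>" using B2E ni unfolding ninf_def by auto
  have B2F: "?B2 \<in> FB E r \<mu>" using B2E mB2 unfolding FB_def by simp
  have zc2: "zc x ?B2 = zc x B" using zc_swap_ff[OF eB e0B xe e0(2)] .
  have le: "phi \<mu> x B \<le> phi \<mu> x ?B2" using B B2F zc2 unfolding opt_def by simp
  have lt: "phi \<mu> x B < phi \<mu> x ?B2"
  proof (rule ccontr)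
    assume "\<not> ?thesis"
    then have "phi \<mu> x ?B2 \<le> phi \<mu> x B" by simp
    then have "opt E r \<mu> x ?B2" using B B2F zc2 unfolding opt_def by fastforce
    then show False using H by blast
  qed
  have sw: "phi \<mu> x ?B2 - real_of_ereal (\<mu> ?B2) = phi \<mu> x B - real_of_ereal (\<mu> B)
           + real_of_ereal (x e) - real_of_ereal (x e0)" using phi_swap[OF fB eB e0B xe e0(2)] .
  obtain a where a: "\<mu> B = ereal a" using BE mB' by (cases "\<mu> B") auto
  obtain c where c: "\<mu> ?B2 = ereal c" using mB2 mB2' by (cases "\<mu> ?B2") auto
  obtain x0 where x0: "x e0 = ereal x0" using e0 xn by (cases "x e0") auto
  obtain x1 where x1: "x e = ereal x1" using xe xn by (cases "x e") auto
  have i1: "c + x1 \<le> a + x0" using e(3) unfolding g_def IeB2 IB using a c x0 x1 by simp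
  have i2: "a + x0 < c + x1" using lt sw a c x0 x1 by simp
  show False using i1 i2 by linarith
qed




lemma lift1:
  assumes finE': "finite E'" and dE: "d \<notin> E'"
    and ex: "exch (insert d E') r \<mu>" and ni: "ninf (insert d E') r \<mu>"
    and B0: "B0 \<in> FB E' r \<mu>" and ut: "u \<in> trop E' r \<mu>"
  shows "\<exists>x \<in> trop (insert d E') r \<mu>. \<forall>e\<in>E'. x e = u e"
proof -
  define E where "E = insert d E'"
  have finE: "finite E" using finE' E_def by simp
  have ex': "exch E r \<mu>" and ni': "ninf E r \<mu>" using ex ni E_def by auto
  have ni0: "ninf E' r \<mu>" using ni ninf_mono by blast
  define k where "k = kmax E' r \<mu> u"
  have un: "\<forall>e. u e \<noteq> -\<infinity>" and uo: "\<forall>e. e \<notin> E' \<longrightarrow> u e = \<infinity>" using ut unfolding trop_def by auto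
  have ud: "u d = \<infinity>" using uo dE by simp
  have FBsub: "FB E' r \<mu> \<subseteq> FB E r \<mu>" unfolding FB_def E_def by auto
  have FBne': "FB E' r \<mu> \<noteq> {}" using B0 by auto
  have FBne: "FB E r \<mu> \<noteq> {}" using B0 FBsub by auto
  have FBd: "\<And>B. B \<in> FB E r \<mu> \<Longrightarrow> d \<notin> B \<Longrightarrow> B \<in> FB E' r \<mu>" unfolding FB_def E_def by auto
  have finFB: "\<And>B. B \<in> FB E r \<mu> \<Longrightarrow> finite B"
  proof -
    fix B assume "B \<in> FB E r \<mu>"
    then have "B \<subseteq> E" unfolding FB_def by simp
    then show "finite B" using finite_subset finE by auto
  qed
  have finv: "\<And>B. B \<in> FB E r \<mu> \<Longrightarrow> \<mu> B \<noteq> \<infinity> \<and> \<mu> B \<noteq> -\<infinity>" using ni' unfolding FB_def ninf_def by auto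
  have covE': "\<And>e. e \<in> E' \<Longrightarrow> u e \<noteq> \<infinity> \<Longrightarrow> \<exists>B. opt E' r \<mu> u B \<and> e \<in> B"
    using cover_if_trop[OF finE' ni0 ut FBne'] by blast
  obtain Bo where Bo: "opt E' r \<mu> u Bo" using opt_exists[OF finE' FBne'] by blast
  have BoF: "Bo \<in> FB E' r \<mu>" "zc u Bo = k" using Bo unfolding opt_def k_def by auto
  have Lz: "\<And>B. B \<in> FB E r \<mu> \<Longrightarrow> d \<in> B \<Longrightarrow> zc u B \<le> k + 1"
  proof -
    fix B assume B: "B \<in> FB E r \<mu>" "d \<in> B"
    have B0E: "B0 \<subseteq> E" "card B0 = r" using B0 unfolding FB_def E_def by auto
    have dB0: "d \<notin> B0" using B0 dE unfolding FB_def by auto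
    have BE: "B \<subseteq> E" "card B = r" using B unfolding FB_def by auto
    obtain j where j: "j \<in> B0 - B"
      and jex: "\<mu> (insert j (B - {d})) + \<mu> (insert d (B0 - {j})) \<le> \<mu> B + \<mu> B0"
      using ex' BE B0E B(2) dB0 unfolding exch_def by (metis DiffI)
    have fB: "finite B" using finFB B(1) by simp
    have fB0: "finite B0" using finFB B0 FBsub by auto
    let ?B3 = "insert j (B - {d})"
    let ?B4 = "insert d (B0 - {j})"
    have "card B0 > 0" using j fB0 card_gt_0_iff by blast
    then have B4E: "?B4 \<subseteq> E" "card ?B4 = r" using B0E j dB0 fB0 E_def by auto
    have m4: "\<mu> ?B4 \<noteq> -\<infinity>" using ni' B4E unfolding ninf_def by auto
    have rhs: "\<mu> B + \<mu> B0 \<noteq> \<infinity>" using finv[OF B(1)] finv[of B0] B0 FBsub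
      by (cases "\<mu> B"; cases "\<mu> B0") auto
    have m3: "\<mu> ?B3 \<noteq> \<infinity>"
    proof
      assume "\<mu> ?B3 = \<infinity>" then show False using jex rhs by simp
    qed
    have "card B > 0" using B(2) fB card_gt_0_iff by blast
    then have B3E: "?B3 \<subseteq> E'" "card ?B3 = r" using B0 j BE fB B(2) unfolding FB_def E_def by auto
    have B3F: "?B3 \<in> FB E' r \<mu>" using B3E m3 unfolding FB_def by simp
    have "zc u ?B3 \<le> k" using zc_le_kmax[OF finE' B3F, of u] k_def by simp
    moreover have "zc u B \<le> zc u ?B3 + 1"
    proof -
      have sub: "{e\<in>B. u e = \<infinity>} \<subseteq> insert d {e\<in>?B3. u e = \<infinity>}" by auto
      have f3: "finite {e\<in>?B3. u e = \<infinity>}" using fB by simp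
      have "card {e\<in>B. u e = \<infinity>} \<le> card (insert d {e\<in>?B3. u e = \<infinity>})"
        using card_mono[OF _ sub] f3 by simp
      also have "\<dots> \<le> card {e\<in>?B3. u e = \<infinity>} + 1" using card_insert_le_m1 f3
        by (simp add: card_insert_if)
      finally show ?thesis unfolding zc_def .
    qed
    ultimately show "zc u B \<le> k + 1" by simp
  qed
  show ?thesis
  proof (cases "\<exists>B\<in>FB E r \<mu>. d \<in> B \<and> zc u B = k + 1")
    case True
    define Cd where "Cd = {B\<in>FB E r \<mu>. d \<in> B \<and> zc u B = k + 1}"
    have fCd: "finite Cd" using FB_finite[OF finE] Cd_def by simp
    have nCd: "Cd \<noteq> {}" using True Cd_def by blast
    have "Min (phi \<mu> u ` Cd) \<in> phi \<mu> u ` Cd" using fCd nCd by (intro Min_in) auto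
    then obtain Bd where Bd: "Bd \<in> Cd" "phi \<mu> u Bd = Min (phi \<mu> u ` Cd)" by (metis imageE)
    have Bdmin: "\<And>B. B \<in> Cd \<Longrightarrow> phi \<mu> u Bd \<le> phi \<mu> u B" using Bd fCd by simp
    define t where "t = phi \<mu> u Bd - phi \<mu> u Bo"
    define x where "x = u(d := ereal t)"
    have xu: "\<And>e. e \<noteq> d \<Longrightarrow> x e = u e" unfolding x_def by simp
    have zcx1: "\<And>B. d \<notin> B \<Longrightarrow> zc x B = zc u B"
    proof -
      fix B :: "nat set" assume dB: "d \<notin> B"
      have xB: "\<And>e. e \<in> B \<Longrightarrow> x e = u e" using dB xu by metis
      have "{e\<in>B. x e = \<infinity>} = {e\<in>B. u e = \<infinity>}" using xB by auto
      then show "zc x B = zc u B" by (simp add: zc_def)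
    qed
    have zcx2: "\<And>B. finite B \<Longrightarrow> d \<in> B \<Longrightarrow> zc u B = zc x B + 1"
    proof -
      fix B :: "nat set" assume B: "finite B" "d \<in> B"
      have "{e\<in>B. u e = \<infinity>} = insert d {e\<in>B. x e = \<infinity>}" "d \<notin> {e\<in>B. x e = \<infinity>}"
        using B ud unfolding x_def by auto
      then show "zc u B = zc x B + 1" unfolding zc_def using B by simp
    qed
    have phx1: "\<And>B. d \<notin> B \<Longrightarrow> phi \<mu> x B = phi \<mu> u B"
    proof -
      fix B :: "nat set" assume dB: "d \<notin> B"
      have xB: "\<And>e. e \<in> B \<Longrightarrow> x e = u e" using dB xu by metis
      have s: "{e\<in>B. x e \<noteq> \<infinity>} = {e\<in>B. u e \<noteq> \<infinity>}" using xB by auto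
      have "(\<Sum>e\<in>{e\<in>B. u e \<noteq> \<infinity>}. real_of_ereal (x e)) = (\<Sum>e\<in>{e\<in>B. u e \<noteq> \<infinity>}. real_of_ereal (u e))"
        using xB by (intro sum.cong) auto
      then show "phi \<mu> x B = phi \<mu> u B" unfolding phi_def s by simp
    qed
    have phx2: "\<And>B. finite B \<Longrightarrow> d \<in> B \<Longrightarrow> phi \<mu> x B = phi \<mu> u B - t"
    proof -
      fix B :: "nat set" assume B: "finite B" "d \<in> B"
      have s: "{e\<in>B. x e \<noteq> \<infinity>} = insert d {e\<in>B. u e \<noteq> \<infinity>}" "d \<notin> {e\<in>B. u e \<noteq> \<infinity>}"
        using B ud unfolding x_def by auto
      have "(\<Sum>e\<in>{e\<in>B. x e \<noteq> \<infinity>}. real_of_ereal (x e)) = t + (\<Sum>e\<in>{e\<in>B. u e \<noteq> \<infinity>}. real_of_ereal (x e))"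
        unfolding s(1) using s(2) B by (simp add: x_def)
      also have "(\<Sum>e\<in>{e\<in>B. u e \<noteq> \<infinity>}. real_of_ereal (x e)) = (\<Sum>e\<in>{e\<in>B. u e \<noteq> \<infinity>}. real_of_ereal (u e))"
        using s(2) by (intro sum.cong) (auto simp: x_def)
      finally show "phi \<mu> x B = phi \<mu> u B - t" unfolding phi_def by simp
    qed
    have km: "kmax E r \<mu> x = k"
    proof (rule kmax_eqI[OF finE])
      show "Bo \<in> FB E r \<mu>" using BoF FBsub by auto
      show "zc x Bo = k" using zcx1 BoF dE unfolding FB_def by auto
      show "\<forall>B'\<in>FB E r \<mu>. zc x B' \<le> k"
      proof
        fix B' assume B': "B' \<in> FB E r \<mu>"
        show "zc x B' \<le> k"
        proof (cases "d \<in> B'")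
          case True then show ?thesis using Lz[OF B'] zcx2[OF finFB[OF B']] by simp
        next
          case False then show ?thesis using zcx1 zc_le_kmax[OF finE' FBd[OF B' False], of u] k_def by simp
        qed
      qed
    qed
    have BdC: "Bd \<in> FB E r \<mu>" "d \<in> Bd" "zc u Bd = k + 1" using Bd(1) Cd_def by auto
    have phBd: "phi \<mu> x Bd = phi \<mu> u Bo" using phx2[OF finFB[OF BdC(1)] BdC(2)] t_def by simp
    have lowb: "\<And>B'. B' \<in> FB E r \<mu> \<Longrightarrow> zc x B' = k \<Longrightarrow> phi \<mu> u Bo \<le> phi \<mu> x B'"
    proof -
      fix B' assume B': "B' \<in> FB E r \<mu>" "zc x B' = k"
      show "phi \<mu> u Bo \<le> phi \<mu> x B'"
      proof (cases "d \<in> B'")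
        case True
        have "B' \<in> Cd" using B' True zcx2[OF finFB[OF B'(1)] True] Cd_def by simp
        then have "phi \<mu> u Bd \<le> phi \<mu> u B'" by (rule Bdmin)
        then show ?thesis using phx2[OF finFB[OF B'(1)] True] t_def by linarith
      next
        case False
        then show ?thesis using Bo FBd[OF B'(1) False] B'(2) zcx1[OF False] phx1[OF False]
          unfolding opt_def k_def by simp
      qed
    qed
    have optE': "\<And>B. opt E' r \<mu> u B \<Longrightarrow> opt E r \<mu> x B"
    proof -
      fix B assume B: "opt E' r \<mu> u B"
      have BF: "B \<in> FB E' r \<mu>" "zc u B = k" using B unfolding opt_def k_def by auto
      have dB: "d \<notin> B" using BF dE unfolding FB_def by auto
      have "phi \<mu> u B \<le> phi \<mu> u Bo" using B BoF unfolding opt_def k_def by simp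
      note le = this
      show "opt E r \<mu> x B" unfolding opt_def km
      proof (intro conjI ballI impI)
        show "B \<in> FB E r \<mu>" using BF FBsub by auto
        show "zc x B = k" using zcx1[OF dB] BF by simp
        fix B' assume "B' \<in> FB E r \<mu>" "zc x B' = k"
        then have "phi \<mu> u Bo \<le> phi \<mu> x B'" by (rule lowb)
        then show "phi \<mu> x B \<le> phi \<mu> x B'" using phx1[OF dB] le by simp
      qed
    qed
    have optBd: "opt E r \<mu> x Bd"
      unfolding opt_def km
    proof (intro conjI ballI impI)
      show "Bd \<in> FB E r \<mu>" using BdC by simp
      show "zc x Bd = k" using BdC zcx2[OF finFB[OF BdC(1)] BdC(2)] by simp
      fix B' assume "B' \<in> FB E r \<mu>" "zc x B' = k"
      then have "phi \<mu> u Bo \<le> phi \<mu> x B'" by (rule lowb)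
      then show "phi \<mu> x Bd \<le> phi \<mu> x B'" using phBd by simp
    qed
    have "x \<in> trop E r \<mu>"
    proof (rule trop_if_cover[OF finE ex' ni'])
      show "\<forall>e. x e \<noteq> -\<infinity>" using un unfolding x_def by simp
      show "\<forall>e. e \<notin> E \<longrightarrow> x e = \<infinity>" using uo unfolding x_def E_def by simp
      show "\<forall>e\<in>E. x e \<noteq> \<infinity> \<longrightarrow> (\<exists>B. opt E r \<mu> x B \<and> e \<in> B)"
      proof (intro ballI impI)
        fix e assume e: "e \<in> E" "x e \<noteq> \<infinity>"
        show "\<exists>B. opt E r \<mu> x B \<and> e \<in> B"
        proof (cases "e = d")
          case True then show ?thesis using optBd BdC by blast
        next
          case False
          then have "e \<in> E'" "u e \<noteq> \<infinity>" using e xu E_def by auto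
          then show ?thesis using covE' optE' by blast
        qed
      qed
    qed
    then have "x \<in> trop (insert d E') r \<mu>" using E_def by simp
    moreover have "\<forall>e\<in>E'. x e = u e" using xu dE by metis
    ultimately show ?thesis by blast
  next
    case False
    have km: "kmax E r \<mu> u = k"
    proof (rule kmax_eqI[OF finE])
      show "Bo \<in> FB E r \<mu>" using BoF FBsub by auto
      show "zc u Bo = k" using BoF by simp
      show "\<forall>B'\<in>FB E r \<mu>. zc u B' \<le> k"
      proof
        fix B' assume B': "B' \<in> FB E r \<mu>"
        show "zc u B' \<le> k"
        proof (cases "d \<in> B'")
          case True then show ?thesis using Lz[OF B'] False B' by force
        next
          case False then show ?thesis using zc_le_kmax[OF finE' FBd[OF B' False], of u] k_def by simp
        qed
      qed
    qed
    have "u \<in> trop E r \<mu>"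
    proof (rule trop_if_cover[OF finE ex' ni'])
      show "\<forall>e. u e \<noteq> -\<infinity>" using un by simp
      show "\<forall>e. e \<notin> E \<longrightarrow> u e = \<infinity>" using uo unfolding E_def by simp
      show "\<forall>e\<in>E. u e \<noteq> \<infinity> \<longrightarrow> (\<exists>B. opt E r \<mu> u B \<and> e \<in> B)"
      proof (intro ballI impI)
        fix e0 assume e0: "e0 \<in> E" "u e0 \<noteq> \<infinity>"
        have e0E': "e0 \<in> E'" using e0 ud E_def by auto
        obtain B' where B': "opt E' r \<mu> u B'" "e0 \<in> B'" using covE' e0E' e0 by blast
        show "\<exists>B. opt E r \<mu> u B \<and> e0 \<in> B"
        proof (rule ccontr)
          assume H: "\<not> ?thesis"
          obtain B1 where B1: "opt E r \<mu> u B1" using opt_exists[OF finE FBne] by blast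
          have e0B1: "e0 \<notin> B1" using H B1 by blast
          have B1F: "B1 \<in> FB E r \<mu>" "zc u B1 = k" using B1 km unfolding opt_def by auto
          have B'F: "B' \<in> FB E' r \<mu>" "zc u B' = k" using B' unfolding opt_def k_def by auto
          have B'F2: "B' \<in> FB E r \<mu>" using B'F FBsub by auto
          have fB1: "finite B1" using finFB B1F by simp
          have fB': "finite B'" using finFB B'F2 by simp
          have B1E: "B1 \<subseteq> E" "card B1 = r" using B1F unfolding FB_def by auto
          have B'E: "B' \<subseteq> E" "card B' = r" using B'F2 unfolding FB_def by auto
          obtain j where j: "j \<in> B1 - B'"
            and jex: "\<mu> (insert j (B' - {e0})) + \<mu> (insert e0 (B1 - {j})) \<le> \<mu> B' + \<mu> B1"
            using ex' B1E B'E B'(2) e0B1 unfolding exch_def by (metis DiffI)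
          let ?B3 = "insert j (B' - {e0})"
          let ?B4 = "insert e0 (B1 - {j})"
          have jB': "j \<notin> B'" "j \<in> B1" using j by auto
          have B3E: "?B3 \<subseteq> E" "card ?B3 = r" using B'E B1E jB' card_swap[OF fB' B'(2) jB'(1)] by auto
          have B4E: "?B4 \<subseteq> E" "card ?B4 = r" using B1E e0 card_swap[OF fB1 jB'(2) e0B1] by auto
          have m3': "\<mu> ?B3 \<noteq> -\<infinity>" using ni' B3E unfolding ninf_def by auto
          have m4': "\<mu> ?B4 \<noteq> -\<infinity>" using ni' B4E unfolding ninf_def by auto
          have rhs: "\<mu> B' + \<mu> B1 \<noteq> \<infinity>" using finv[OF B1F(1)] finv[OF B'F2]
            by (cases "\<mu> B1"; cases "\<mu> B'") auto
          have m3: "\<mu> ?B3 \<noteq> \<infinity>"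
          proof
            assume "\<mu> ?B3 = \<infinity>" then show False using jex rhs by simp
          qed
          have m4: "\<mu> ?B4 \<noteq> \<infinity>"
          proof
            assume "\<mu> ?B4 = \<infinity>" then show False using jex rhs by simp
          qed
          have B3F: "?B3 \<in> FB E r \<mu>" using B3E m3 unfolding FB_def by simp
          have B4F: "?B4 \<in> FB E r \<mu>" using B4E m4 unfolding FB_def by simp
          show False
          proof (cases "j = d")
            case True
            have uj: "u j = \<infinity>" using True ud by simp
            have "zc u ?B3 = zc u B' + 1" using zc_swap_fi[OF fB' B'(2) jB'(1) e0(2) uj] .
            then show False using False B3F True B'F(2) by auto
          next
            case jd: False
            have jE': "j \<in> E'" using jd B1E(1) jB'(2) E_def by auto
            have B3F': "?B3 \<in> FB E' r \<mu>" using B3F B'F(1) jE' unfolding FB_def by auto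
            show False
            proof (cases "u j = \<infinity>")
              case True
              have "zc u ?B3 = zc u B' + 1" using zc_swap_fi[OF fB' B'(2) jB'(1) e0(2) True] .
              then show False using zc_le_kmax[OF finE' B3F', of u] B'F k_def by simp
            next
              case uj: False
              have "zc u ?B3 = zc u B'" using zc_swap_ff[OF B'(2) jB'(1) e0(2) uj] .
              then have le3: "phi \<mu> u B' \<le> phi \<mu> u ?B3" using B' B3F' unfolding opt_def by simp
              have z4: "zc u ?B4 = zc u B1" using zc_swap_ff[OF jB'(2) e0B1 uj e0(2)] .
              have le4: "phi \<mu> u B1 < phi \<mu> u ?B4"
              proof (rule ccontr)
                assume "\<not> ?thesis"
                then have "phi \<mu> u ?B4 \<le> phi \<mu> u B1" by simp
                then have "opt E r \<mu> u ?B4" using B1 B4F z4 unfolding opt_def by fastforce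
                then show False using H by blast
              qed
              have sw3: "phi \<mu> u ?B3 - real_of_ereal (\<mu> ?B3) = phi \<mu> u B' - real_of_ereal (\<mu> B')
                 + real_of_ereal (u e0) - real_of_ereal (u j)" using phi_swap[OF fB' B'(2) jB'(1) e0(2) uj] .
              have sw4: "phi \<mu> u ?B4 - real_of_ereal (\<mu> ?B4) = phi \<mu> u B1 - real_of_ereal (\<mu> B1)
                 + real_of_ereal (u j) - real_of_ereal (u e0)" using phi_swap[OF fB1 jB'(2) e0B1 uj e0(2)] .
              obtain a1 where a1: "\<mu> B1 = ereal a1" using finv[OF B1F(1)] by (cases "\<mu> B1") auto
              obtain a2 where a2: "\<mu> B' = ereal a2" using finv[OF B'F2] by (cases "\<mu> B'") auto
              obtain c3 where c3: "\<mu> ?B3 = ereal c3" using m3 m3' by (cases "\<mu> ?B3") auto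
              obtain c4 where c4: "\<mu> ?B4 = ereal c4" using m4 m4' by (cases "\<mu> ?B4") auto
              have i1: "c3 + c4 \<le> a2 + a1" using jex a1 a2 c3 c4 by simp
              have i2: "a2 \<le> c3 + real_of_ereal (u e0) - real_of_ereal (u j)" using le3 sw3 a2 c3 by simp
              have i3: "a1 < c4 + real_of_ereal (u j) - real_of_ereal (u e0)" using le4 sw4 a1 c4 by simp
              show False using i1 i2 i3 by linarith
            qed
          qed
        qed
      qed
    qed
    then show ?thesis using E_def by auto
  qed
qed




lemma liftD:
  assumes finE: "finite E" and ex: "exch E r \<mu>" and ni: "ninf E r \<mu>" and fD: "finite D"
  shows "D \<subseteq> E \<Longrightarrow> B0 \<in> FB (E - D) r \<mu> \<Longrightarrow> u \<in> trop (E - D) r \<mu> \<Longrightarrow>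
         \<exists>v\<in>trop E r \<mu>. \<forall>e\<in>E - D. v e = u e"
  using fD
proof (induction D arbitrary: u rule: finite_induct)
  case empty then show ?case by auto
next
  case (insert d D0)
  let ?E' = "E - insert d D0"
  have ins: "insert d ?E' = E - D0" using insert by auto
  have ex1: "exch (insert d ?E') r \<mu>" unfolding ins using exch_mono[OF ex] by blast
  have ni1: "ninf (insert d ?E') r \<mu>" unfolding ins using ninf_mono[OF ni] by blast
  obtain u' where u': "u' \<in> trop (insert d ?E') r \<mu>" "\<forall>e\<in>?E'. u' e = u e"
    using lift1[OF _ _ ex1 ni1 insert.prems(2) insert.prems(3)] finE by auto
  have B0': "B0 \<in> FB (E - D0) r \<mu>" using insert.prems(2) unfolding FB_def by auto
  have u'2: "u' \<in> trop (E - D0) r \<mu>" using u'(1) ins by simp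
  have "D0 \<subseteq> E" using insert.prems(1) by simp
  then have "\<exists>v\<in>trop E r \<mu>. \<forall>e\<in>E - D0. v e = u' e" using insert.IH[OF _ B0' u'2] by simp
  then obtain v where v: "v \<in> trop E r \<mu>" "\<forall>e\<in>E - D0. v e = u' e" by blast
  have "\<forall>e\<in>E - insert d D0. v e = u e" using v(2) u'(2) by auto
  then show ?case using v(1) by (intro bexI[of _ v])
qed

lemma sum_nmi: "(\<forall>i\<in>B. f i \<noteq> -\<infinity>) \<Longrightarrow> sum f B \<noteq> (-\<infinity>::ereal)"
proof (induction B rule: infinite_finite_induct)
  case (insert a B)
  then show ?case by (cases "f a"; cases "sum f B") auto
qed auto

lemma sum_fin_ereal: "\<forall>i\<in>B. f i \<noteq> \<infinity> \<and> f i \<noteq> -\<infinity> \<Longrightarrow> sum f B = ereal (\<Sum>i\<in>B. real_of_ereal (f i))"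
proof -
  assume a: "\<forall>i\<in>B. f i \<noteq> \<infinity> \<and> f i \<noteq> -\<infinity>"
  have "sum f B = (\<Sum>i\<in>B. ereal (real_of_ereal (f i)))"
    using a ereal_fin by (intro sum.cong) auto
  then show ?thesis by simp
qed

lemma sub01:
  fixes n :: nat and B :: "nat set"
  assumes "B \<subseteq> {0..n}" "0 \<notin> B" shows "B \<subseteq> {1..n}"
proof
  fix x assume "x \<in> B"
  have "x \<le> n" using \<open>x \<in> B\<close> assms(1) by auto
  moreover have "x \<noteq> 0"
  proof
    assume "x = 0" then show False using \<open>x \<in> B\<close> assms(2) by simp
  qed
  moreover have "1 \<le> x" using \<open>x \<noteq> 0\<close> by (cases x) auto
  ultimately show "x \<in> {1..n}" by simp
qed

lemma core:
  fixes w :: "nat \<Rightarrow> ereal" and \<nu> \<mu> :: "nat set \<Rightarrow> ereal"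
  assumes vm: "valuated_matroid {1..n} r \<mu>"
    and wn: "\<forall>i\<in>{1..n}. w i \<noteq> -\<infinity>"
    and nu: "\<forall>B. B \<subseteq> {0..n} \<longrightarrow> \<nu> B = (if 0 \<in> B then \<infinity> else \<mu> B + (\<Sum>i\<in>B. w i))"
    and fb: "\<exists>B. B \<subseteq> {1..n} \<and> card B = r \<and> \<mu> B \<noteq> \<infinity> \<and> (\<forall>i\<in>B. w i \<noteq> \<infinity>)"
  shows "proj_n n ` trop {0..n} r \<nu> = (\<lambda>v i. if i \<in> {1..n} then w i + v i else \<infinity>) ` trop {1..n} r \<mu>"
proof -
  have ex: "exch {1..n} r \<mu>" and ni: "ninf {1..n} r \<mu>"
    using vm unfolding valuated_matroid_def exch_def ninf_def by auto
  have sumI: "\<And>B. B \<subseteq> {1..n} \<Longrightarrow> (\<Sum>i\<in>B. w i) \<noteq> -\<infinity>"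
    using wn by (intro sum_nmi) auto
  have sumInf: "\<And>B i. B \<subseteq> {1..n} \<Longrightarrow> i \<in> B \<Longrightarrow> w i = \<infinity> \<Longrightarrow> (\<Sum>i\<in>B. w i) = \<infinity>"
  proof -
    fix B i assume a: "B \<subseteq> {1..n}" "i \<in> B" "w i = \<infinity>"
    have "finite B" using finite_subset[OF a(1)] by simp
    then show "(\<Sum>i\<in>B. w i) = \<infinity>" using sum_Pinfty[of w B] a by blast
  qed
  have nuB: "\<And>B. B \<subseteq> {1..n} \<Longrightarrow> \<nu> B = \<mu> B + (\<Sum>i\<in>B. w i)"
  proof -
    fix B :: "nat set" assume B: "B \<subseteq> {1..n}"
    then have "B \<subseteq> {0..n}" "0 \<notin> B" by auto
    then show "\<nu> B = \<mu> B + (\<Sum>i\<in>B. w i)" using nu by simp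
  qed
  have nuBd: "\<And>B e. B \<subseteq> {1..n} \<Longrightarrow> \<nu> (B - {e}) = \<mu> (B - {e}) + (\<Sum>i\<in>B - {e}. w i)"
  proof -
    fix B :: "nat set" and e assume "B \<subseteq> {1..n}"
    then have "B - {e} \<subseteq> {1..n}" by auto
    then show "\<nu> (B - {e}) = \<mu> (B - {e}) + (\<Sum>i\<in>B - {e}. w i)" by (rule nuB)
  qed
  have nu0: "\<And>B. B \<subseteq> {0..n} \<Longrightarrow> 0 \<in> B \<Longrightarrow> \<nu> B = \<infinity>" using nu by auto
  show ?thesis
  proof
    show "(\<lambda>v i. if i \<in> {1..n} then w i + v i else \<infinity>) ` trop {1..n} r \<mu> \<subseteq> proj_n n ` trop {0..n} r \<nu>"
    proof
      fix y assume "y \<in> (\<lambda>v i. if i \<in> {1..n} then w i + v i else \<infinity>) ` trop {1..n} r \<mu>"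
      then obtain v where v: "v \<in> trop {1..n} r \<mu>" and y: "y = (\<lambda>i. if i \<in> {1..n} then w i + v i else \<infinity>)"
        by blast
      have vn: "\<forall>e. v e \<noteq> -\<infinity>" using v unfolding trop_def by simp
      have py: "proj_n n y = y" unfolding proj_n_def y by auto
      have "y \<in> trop {0..n} r \<nu>"
        unfolding trop_def
      proof (intro CollectI conjI allI impI)
        fix e show "y e \<noteq> -\<infinity>" unfolding y using wn vn
          by (cases "w e"; cases "v e") auto
      next
        fix e assume "e \<notin> {0..n}" then show "y e = \<infinity>" unfolding y by auto
      next
        fix I assume I: "I \<subseteq> {0..n} \<and> card I = Suc r \<and> (\<exists>e\<in>I. \<nu> (I - {e}) \<noteq> \<infinity>)"
        show "min_twice I (\<lambda>e. \<nu> (I - {e}) + y e)"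
        proof (cases "0 \<in> I")
          case True
          have "\<forall>e\<in>I. \<nu> (I - {e}) + y e = \<infinity>"
          proof
            fix e assume e: "e \<in> I"
            show "\<nu> (I - {e}) + y e = \<infinity>"
            proof (cases "e = 0")
              case True then show ?thesis unfolding y by simp
            next
              case False then have "\<nu> (I - {e}) = \<infinity>" using nu0[of "I - {e}"] I \<open>0 \<in> I\<close> by auto
              then show ?thesis by simp
            qed
          qed
          then show ?thesis unfolding min_twice_def by simp
        next
          case False
          have I1: "I \<subseteq> {1..n}" using sub01 I False by blast
          have fI: "finite I" using finite_subset[OF I1] by simp
          show ?thesis
          proof (cases "\<exists>l\<in>I. w l = \<infinity>")
            case True
            then obtain l where l: "l \<in> I" "w l = \<infinity>" by blast
            have "\<forall>e\<in>I. \<nu> (I - {e}) + y e = \<infinity>"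
            proof
              fix e assume e: "e \<in> I"
              show "\<nu> (I - {e}) + y e = \<infinity>"
              proof (cases "e = l")
                case True then show ?thesis unfolding y using l I1 by auto
              next
                case False
                have "(\<Sum>i\<in>I - {e}. w i) = \<infinity>" using sumInf[of "I - {e}" l] l False I1 by auto
                then have "\<nu> (I - {e}) = \<infinity>" using nuBd[OF I1, of e] by auto
                then show ?thesis by simp
              qed
            qed
            then show ?thesis unfolding min_twice_def by simp
          next
            case False
            then have wf: "\<forall>i\<in>I. w i \<noteq> \<infinity> \<and> w i \<noteq> -\<infinity>" using wn I1 by auto
            define W where "W = (\<Sum>i\<in>I. real_of_ereal (w i))"
            have key: "\<forall>e\<in>I. \<nu> (I - {e}) + y e = (\<mu> (I - {e}) + v e) + ereal W"
            proof
              fix e assume e: "e \<in> I"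
              have s1: "(\<Sum>i\<in>I - {e}. w i) = ereal (\<Sum>i\<in>I - {e}. real_of_ereal (w i))"
                using wf by (intro sum_fin_ereal) auto
              have s2: "(\<Sum>i\<in>I - {e}. real_of_ereal (w i)) = W - real_of_ereal (w e)"
                unfolding W_def using fI e by (simp add: sum_diff1)
              obtain c where c: "w e = ereal c" using wf e by (cases "w e") auto
              have Ie: "I - {e} \<subseteq> {1..n}" using I1 by auto
              have n1: "\<nu> (I - {e}) = \<mu> (I - {e}) + ereal (W - real_of_ereal (w e))"
                using nuB[OF Ie] s1 s2 by simp
              have ye: "y e = ereal (real_of_ereal (w e)) + v e" unfolding y using I1 e c by auto
              have "\<nu> (I - {e}) + y e = \<mu> (I - {e}) + ereal (W - real_of_ereal (w e)) + (ereal (real_of_ereal (w e)) + v e)"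
                unfolding n1 ye ..
              also have "\<dots> = \<mu> (I - {e}) + v e + (ereal (W - real_of_ereal (w e)) + ereal (real_of_ereal (w e)))"
                by (simp only: ac_simps)
              also have "\<dots> = (\<mu> (I - {e}) + v e) + ereal W"
                by (simp only: plus_ereal.simps(1) diff_add_cancel)
              finally show "\<nu> (I - {e}) + y e = (\<mu> (I - {e}) + v e) + ereal W" .
            qed
            obtain e where e: "e \<in> I" "\<nu> (I - {e}) \<noteq> \<infinity>" using I by blast
            have "\<mu> (I - {e}) \<noteq> \<infinity>" using e nuBd[OF I1, of e] by auto
            then have "min_twice I (\<lambda>e. \<mu> (I - {e}) + v e)"
              using trop_cond[OF v I1 _ e(1)] I by blast
            then show ?thesis using min_twice_shift[OF _ key] by simp
          qed
        qed
      qed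
      then show "y \<in> proj_n n ` trop {0..n} r \<nu>" using py by (metis image_eqI)
    qed
  next
    show "proj_n n ` trop {0..n} r \<nu> \<subseteq> (\<lambda>v i. if i \<in> {1..n} then w i + v i else \<infinity>) ` trop {1..n} r \<mu>"
    proof
      fix y assume "y \<in> proj_n n ` trop {0..n} r \<nu>"
      then obtain x where x: "x \<in> trop {0..n} r \<nu>" and y: "y = proj_n n x" by blast
      have xn: "\<forall>e. x e \<noteq> -\<infinity>" using x unfolding trop_def by simp
      define L where "L = {i\<in>{1..n}. w i = \<infinity>}"
      define E' where "E' = {1..n} - L"
      define u where "u i = (if i \<in> E' then x i + ereal (- real_of_ereal (w i)) else \<infinity>)" for i
      have wE': "\<And>i. i \<in> E' \<Longrightarrow> w i = ereal (real_of_ereal (w i))"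
        using wn ereal_fin unfolding E'_def L_def by auto
      obtain B where B: "B \<subseteq> {1..n}" "card B = r" "\<mu> B \<noteq> \<infinity>" "\<forall>i\<in>B. w i \<noteq> \<infinity>" using fb by blast
      have BE': "B \<subseteq> E'" using B unfolding E'_def L_def by auto
      have ut: "u \<in> trop E' r \<mu>"
        unfolding trop_def
      proof (intro CollectI conjI allI impI)
        fix e show "u e \<noteq> -\<infinity>" unfolding u_def using xn by (cases "x e") auto
      next
        fix e assume "e \<notin> E'" then show "u e = \<infinity>" unfolding u_def by auto
      next
        fix I assume I: "I \<subseteq> E' \<and> card I = Suc r \<and> (\<exists>e\<in>I. \<mu> (I - {e}) \<noteq> \<infinity>)"
        have I1: "I \<subseteq> {1..n}" using I E'_def by auto
        have I0: "I \<subseteq> {0..n}" using I1 by auto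
        have fI: "finite I" using finite_subset[OF I1] by simp
        have wf: "\<forall>i\<in>I. w i \<noteq> \<infinity> \<and> w i \<noteq> -\<infinity>" using wn I E'_def L_def by auto
        define W where "W = (\<Sum>i\<in>I. real_of_ereal (w i))"
        have nuI: "\<And>e. e \<in> I \<Longrightarrow> \<nu> (I - {e}) = \<mu> (I - {e}) + ereal (W - real_of_ereal (w e))"
        proof -
          fix e assume e: "e \<in> I"
          have s1: "(\<Sum>i\<in>I - {e}. w i) = ereal (\<Sum>i\<in>I - {e}. real_of_ereal (w i))"
            using wf by (intro sum_fin_ereal) auto
          have s2: "(\<Sum>i\<in>I - {e}. real_of_ereal (w i)) = W - real_of_ereal (w e)"
            unfolding W_def using fI e by (simp add: sum_diff1)
          show "\<nu> (I - {e}) = \<mu> (I - {e}) + ereal (W - real_of_ereal (w e))"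
            using nuBd[OF I1, of e] s1 s2 by auto
        qed
        obtain e where e: "e \<in> I" "\<mu> (I - {e}) \<noteq> \<infinity>" using I by blast
        have "\<nu> (I - {e}) \<noteq> \<infinity>" using nuI[OF e(1)] e(2) by (cases "\<mu> (I - {e})") auto
        then have mt: "min_twice I (\<lambda>e. \<nu> (I - {e}) + x e)"
          using trop_cond[OF x I0 _ e(1)] I by blast
        have key: "\<forall>e\<in>I. \<mu> (I - {e}) + u e = (\<nu> (I - {e}) + x e) + ereal (- W)"
        proof
          fix e assume e: "e \<in> I"
          have "(\<nu> (I - {e}) + x e) + ereal (- W) = \<mu> (I - {e}) + x e + (ereal (W - real_of_ereal (w e)) + ereal (- W))"
            unfolding nuI[OF e] by (simp only: ac_simps)
          also have "ereal (W - real_of_ereal (w e)) + ereal (- W) = ereal (- real_of_ereal (w e))" by simp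
          also have "\<mu> (I - {e}) + x e + ereal (- real_of_ereal (w e)) = \<mu> (I - {e}) + u e"
          proof -
            have "e \<in> E'" using e I by auto
            then have "u e = x e + ereal (- real_of_ereal (w e))" unfolding u_def by simp
            then show ?thesis by (simp only: ac_simps)
          qed
          finally show "\<mu> (I - {e}) + u e = (\<nu> (I - {e}) + x e) + ereal (- W)" by simp
        qed
        show "min_twice I (\<lambda>e. \<mu> (I - {e}) + u e)" using min_twice_shift[OF mt key] .
      qed
      have LE: "L \<subseteq> {1..n}" "finite L" unfolding L_def by auto
      have EE': "{1..n} - L = E'" unfolding E'_def by simp
      have BF: "B \<in> FB ({1..n} - L) r \<mu>" using B BE' EE' unfolding FB_def by auto
      obtain v where v: "v \<in> trop {1..n} r \<mu>" "\<forall>e\<in>{1..n} - L. v e = u e"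
        using liftD[OF _ ex ni LE(2) LE(1) BF] ut EE' by auto
      have vn: "\<forall>e. v e \<noteq> -\<infinity>" using v unfolding trop_def by simp
      have xL: "\<And>i. i \<in> L \<Longrightarrow> x i = \<infinity>"
      proof (rule ccontr)
        fix i assume i: "i \<in> L" and xi: "x i \<noteq> \<infinity>"
        have iB: "i \<notin> B" using i B unfolding L_def by auto
        have fB: "finite B" using finite_subset[OF B(1)] by simp
        let ?I = "insert i B"
        have I0: "?I \<subseteq> {0..n}" "card ?I = Suc r" using B i iB fB unfolding L_def by auto
        have I1: "?I \<subseteq> {1..n}" using B i unfolding L_def by auto
        have IB: "?I - {i} = B" using iB by auto
        have sB: "(\<Sum>i\<in>B. w i) \<noteq> \<infinity>" using sum_Pinfty[of w B] B(4) by auto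
        have nB: "\<nu> B \<noteq> \<infinity>" using nuB[OF B(1)] B(3) sB by (cases "\<mu> B"; cases "\<Sum>i\<in>B. w i") auto
        have nB2: "\<nu> (?I - {i}) \<noteq> \<infinity>" using IB nB by simp
        have mt: "min_twice ?I (\<lambda>e. \<nu> (?I - {e}) + x e)"
          using trop_cond[OF x I0(1) I0(2) insertI1 nB2] .
        have inf: "\<And>e. e \<in> B \<Longrightarrow> \<nu> (?I - {e}) + x e = \<infinity>"
        proof -
          fix e assume e: "e \<in> B"
          have s1: "?I - {e} \<subseteq> {1..n}" using I1 by auto
          have s2: "i \<in> ?I - {e}" using iB e by auto
          have "w i = \<infinity>" using i unfolding L_def by simp
          then have "(\<Sum>i\<in>?I - {e}. w i) = \<infinity>" using sumInf[OF s1 s2] by simp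
          then have "\<nu> (?I - {e}) = \<infinity>" using nuBd[OF I1, of e] by auto
          then show "\<nu> (?I - {e}) + x e = \<infinity>" by simp
        qed
        have fi: "\<nu> (?I - {i}) + x i \<noteq> \<infinity>" unfolding IB using nB xi by (cases "\<nu> B"; cases "x i") auto
        then have "\<not> (\<forall>e\<in>?I. \<nu> (?I - {e}) + x e = \<infinity>)" by auto
        then obtain e1 e2 where ee: "e1 \<in> ?I" "e2 \<in> ?I" "e1 \<noteq> e2"
          "\<nu> (?I - {e1}) + x e1 = \<nu> (?I - {e2}) + x e2" "\<forall>e\<in>?I. \<nu> (?I - {e1}) + x e1 \<le> \<nu> (?I - {e}) + x e"
          using mt unfolding min_twice_def by blast
        obtain e where e: "e \<in> ?I" "e \<noteq> i" "\<nu> (?I - {e}) + x e \<le> \<nu> (?I - {i}) + x i"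
        proof (cases "e1 = i")
          case True
          have "\<nu> (?I - {e2}) + x e2 = \<nu> (?I - {i}) + x i" using ee(4) True by simp
          then show ?thesis using that[of e2] ee(2,3) True by simp
        next
          case False
          then show ?thesis using that[of e1] ee(1,5) by simp
        qed
        have "e \<in> B" using e by auto
        then have "\<nu> (?I - {e}) + x e = \<infinity>" by (rule inf)
        then show False using le_not_inf[OF e(3) fi] by simp
      qed
      have "y = (\<lambda>i. if i \<in> {1..n} then w i + v i else \<infinity>)"
      proof
        fix i
        show "y i = (if i \<in> {1..n} then w i + v i else \<infinity>)"
        proof (cases "i \<in> {1..n}")
          case False then show ?thesis unfolding y proj_n_def by auto
        next
          case True
          show ?thesis
          proof (cases "i \<in> L")
            case True then show ?thesis unfolding y proj_n_def using xL L_def by auto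
          next
            case False
            then have iE: "i \<in> E'" using \<open>i \<in> {1..n}\<close> E'_def by auto
            have "w i + v i = x i"
              using v(2) iE EE' wE'[OF iE] xn unfolding u_def
              by (cases "x i"; cases "w i") auto
            then show ?thesis unfolding y proj_n_def using \<open>i \<in> {1..n}\<close> by simp
          qed
        qed
      qed
      from this v(1) show "y \<in> (\<lambda>v i. if i \<in> {1..n} then w i + v i else \<infinity>) ` trop {1..n} r \<mu>"
        by (rule image_eqI)
    qed
  qed
qed




lemma pullback_eq:
  assumes f: "\<forall>i\<in>{0..n}. fst (f i) = i" and B: "B \<subseteq> {0..n}" and fn: "\<forall>i\<in>{0..n}. snd (f i) \<noteq> -\<infinity>"
  shows "pullback n \<mu> f B = (if 0 \<in> B then \<infinity> else \<mu> B + (\<Sum>i\<in>B. snd (f i)))"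
proof -
  have im: "(fst \<circ> f) ` B = B" using f B by (force simp: image_iff)
  have inj: "inj_on (fst \<circ> f) B" using f B by (auto simp: inj_on_def subset_iff)
  show ?thesis unfolding pullback_def pointed_def using im inj B by simp
qed

lemma trop_act_diag:
  assumes val0: "val 0 = \<infinity>" and offd: "\<forall>i\<in>{1..n}. \<forall>j\<in>{1..n}. j \<noteq> i \<longrightarrow> A i j = 0"
    and dg: "\<forall>i\<in>{1..n}. val (A i i) = w i" and vn: "\<forall>j. v j \<noteq> -\<infinity>"
  shows "trop_act n val A v = (\<lambda>i. if i \<in> {1..n} then w i + v i else \<infinity>)"
proof
  fix i
  show "trop_act n val A v i = (if i \<in> {1..n} then w i + v i else \<infinity>)"
  proof (cases "i \<in> {1..n}")
    case True
    have "(INF j\<in>{1..n}. val (A i j) + v j) = w i + v i"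
    proof (rule antisym)
      show "(INF j\<in>{1..n}. val (A i j) + v j) \<le> w i + v i"
        using INF_lower[OF True, of "\<lambda>j. val (A i j) + v j"] dg True by simp
      show "w i + v i \<le> (INF j\<in>{1..n}. val (A i j) + v j)"
      proof (rule INF_greatest)
        fix j assume j: "j \<in> {1..n}"
        show "w i + v i \<le> val (A i j) + v j"
        proof (cases "j = i")
          case True then show ?thesis using dg j by simp
        next
          case False then show ?thesis using offd j \<open>i \<in> {1..n}\<close> val0 by simp
        qed
      qed
    qed
    then show ?thesis unfolding trop_act_def using True by simp
  next
    case False then show ?thesis unfolding trop_act_def by auto
  qed
qed

theorem lemma2p23:
  fixes val :: "'k::field \<Rightarrow> ereal" and \<mu> :: "nat set \<Rightarrow> ereal" and n r :: nat
  assumes "nonarch_valuation val"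
    and "valuated_matroid {1..n} r \<mu>"
  shows "(\<forall>(f :: nat \<Rightarrow> nat \<times> ereal) (A :: nat \<Rightarrow> nat \<Rightarrow> 'k).
            (\<forall>i\<in>{0..n}. fst (f i) = i) \<and> (\<forall>i\<in>{0..n}. snd (f i) \<noteq> -\<infinity>) \<and>
            (\<forall>i\<in>{1..n}. \<exists>k. snd (f i) = val k) \<and>
            associated_matrix n val f A \<and>
            valuated_matroid {0..n} r (pullback n \<mu> f) \<longrightarrow>
            proj_n n ` trop {0..n} r (pullback n \<mu> f) = trop_act n val A ` trop {1..n} r \<mu>)
       \<and> (\<forall>A :: nat \<Rightarrow> nat \<Rightarrow> 'k. full_rank_diagonal n A \<longrightarrow>
            proj_n n ` trop {0..n} r (pullback n \<mu> (associated_map n val A))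
              = trop_act n val A ` trop {1..n} r \<mu>)"
proof -
  have val0: "val 0 = \<infinity>" and valf: "\<And>x. x \<noteq> 0 \<Longrightarrow> \<exists>c::real. val x = ereal c"
    using assms(1) unfolding nonarch_valuation_def by auto
  have vm: "valuated_matroid {1..n} r \<mu>" by (rule assms(2))
  have tvn: "\<And>v j. v \<in> trop {1..n} r \<mu> \<Longrightarrow> v j \<noteq> -\<infinity>" unfolding trop_def by simp
  have part1: "\<And>(f :: nat \<Rightarrow> nat \<times> ereal) (A :: nat \<Rightarrow> nat \<Rightarrow> 'k).
            (\<forall>i\<in>{0..n}. fst (f i) = i) \<Longrightarrow> (\<forall>i\<in>{0..n}. snd (f i) \<noteq> -\<infinity>) \<Longrightarrow>
            (\<forall>i\<in>{1..n}. val (A i i) = snd (f i)) \<Longrightarrow>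
            (\<forall>i\<in>{1..n}. \<forall>j\<in>{1..n}. j \<noteq> i \<longrightarrow> A i j = 0) \<Longrightarrow>
            (\<exists>B. B \<subseteq> {1..n} \<and> card B = r \<and> \<mu> B \<noteq> \<infinity> \<and> (\<forall>i\<in>B. snd (f i) \<noteq> \<infinity>)) \<Longrightarrow>
            proj_n n ` trop {0..n} r (pullback n \<mu> f) = trop_act n val A ` trop {1..n} r \<mu>"
  proof -
    fix f :: "nat \<Rightarrow> nat \<times> ereal" and A :: "nat \<Rightarrow> nat \<Rightarrow> 'k"
    assume f1: "\<forall>i\<in>{0..n}. fst (f i) = i" and f2: "\<forall>i\<in>{0..n}. snd (f i) \<noteq> -\<infinity>"
      and dg: "\<forall>i\<in>{1..n}. val (A i i) = snd (f i)"
      and offd: "\<forall>i\<in>{1..n}. \<forall>j\<in>{1..n}. j \<noteq> i \<longrightarrow> A i j = 0"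
      and fb: "\<exists>B. B \<subseteq> {1..n} \<and> card B = r \<and> \<mu> B \<noteq> \<infinity> \<and> (\<forall>i\<in>B. snd (f i) \<noteq> \<infinity>)"
    have c: "proj_n n ` trop {0..n} r (pullback n \<mu> f) =
        (\<lambda>v i. if i \<in> {1..n} then snd (f i) + v i else \<infinity>) ` trop {1..n} r \<mu>"
      by (rule core[OF vm]) (use f2 pullback_eq[OF f1 _ f2] fb in auto)
    have "trop_act n val A ` trop {1..n} r \<mu> = (\<lambda>v i. if i \<in> {1..n} then snd (f i) + v i else \<infinity>) ` trop {1..n} r \<mu>"
      by (rule image_cong[OF refl]) (rule trop_act_diag[OF val0 offd dg], simp add: tvn)
    then show "proj_n n ` trop {0..n} r (pullback n \<mu> f) = trop_act n val A ` trop {1..n} r \<mu>"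
      using c by simp
  qed
  show ?thesis
  proof (intro conjI allI impI)
    fix f :: "nat \<Rightarrow> nat \<times> ereal" and A :: "nat \<Rightarrow> nat \<Rightarrow> 'k"
    assume H: "(\<forall>i\<in>{0..n}. fst (f i) = i) \<and> (\<forall>i\<in>{0..n}. snd (f i) \<noteq> -\<infinity>) \<and>
            (\<forall>i\<in>{1..n}. \<exists>k. snd (f i) = val k) \<and>
            associated_matrix n val f A \<and>
            valuated_matroid {0..n} r (pullback n \<mu> f)"
    have f1: "\<forall>i\<in>{0..n}. fst (f i) = i" and f2: "\<forall>i\<in>{0..n}. snd (f i) \<noteq> -\<infinity>" using H by auto
    have am: "associated_matrix n val f A" and vmf: "valuated_matroid {0..n} r (pullback n \<mu> f)" using H by auto
    have dg: "\<forall>i\<in>{1..n}. val (A i i) = snd (f i)" using am f1 unfolding associated_matrix_def by auto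
    have offd: "\<forall>i\<in>{1..n}. \<forall>j\<in>{1..n}. j \<noteq> i \<longrightarrow> A i j = 0" using am f1 unfolding associated_matrix_def by auto
    obtain B where B: "B \<subseteq> {0..n}" "card B = r" "pullback n \<mu> f B \<noteq> \<infinity>"
      using vmf unfolding valuated_matroid_def by blast
    have pb: "pullback n \<mu> f B = (if 0 \<in> B then \<infinity> else \<mu> B + (\<Sum>i\<in>B. snd (f i)))"
      using pullback_eq[OF f1 B(1) f2] .
    have B0: "0 \<notin> B" using pb B(3) by auto
    have B1: "B \<subseteq> {1..n}" using sub01[OF B(1) B0] .
    have ne: "\<mu> B + (\<Sum>i\<in>B. snd (f i)) \<noteq> \<infinity>" using pb B(3) B0 by simp
    have mB: "\<mu> B \<noteq> \<infinity>" using ne by auto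
    have sB: "(\<Sum>i\<in>B. snd (f i)) \<noteq> \<infinity>" using ne by auto
    have fB: "finite B" using finite_subset[OF B1] by simp
    have "\<forall>i\<in>B. snd (f i) \<noteq> \<infinity>" using sB fB sum_Pinfty by metis
    then show "proj_n n ` trop {0..n} r (pullback n \<mu> f) = trop_act n val A ` trop {1..n} r \<mu>"
      using part1[OF f1 f2 dg offd] B1 B(2) mB by blast
  next
    fix A :: "nat \<Rightarrow> nat \<Rightarrow> 'k"
    assume fd: "full_rank_diagonal n A"
    define f where "f = associated_map n val A"
    have offd: "\<forall>i\<in>{1..n}. \<forall>j\<in>{1..n}. j \<noteq> i \<longrightarrow> A i j = 0" using fd unfolding full_rank_diagonal_def by auto
    have nz: "\<forall>i\<in>{1..n}. A i i \<noteq> 0" using fd unfolding full_rank_diagonal_def by auto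
    have fi: "\<And>i. i \<in> {1..n} \<Longrightarrow> f i = (i, val (A i i))"
    proof -
      fix i assume i: "i \<in> {1..n}"
      have ex: "\<exists>j\<in>{1..n}. A i j \<noteq> 0" using i nz by blast
      have th: "(THE j. j \<in> {1..n} \<and> A i j \<noteq> 0) = i"
      proof (rule the_equality)
        show "i \<in> {1..n} \<and> A i i \<noteq> 0" using i nz by simp
        fix j assume j: "j \<in> {1..n} \<and> A i j \<noteq> 0"
        show "j = i"
        proof (rule ccontr)
          assume "j \<noteq> i"
          then have "A i j = 0" using offd i j by simp
          then show False using j by simp
        qed
      qed
      show "f i = (i, val (A i i))" unfolding f_def associated_map_def using i ex th by (simp add: Let_def)
    qed
    have f0: "f 0 = (0, \<infinity>)" unfolding f_def associated_map_def by simp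
    have f1: "\<forall>i\<in>{0..n}. fst (f i) = i"
    proof
      fix i :: nat assume "i \<in> {0..n}"
      then show "fst (f i) = i" using fi f0 by (cases "i = 0") auto
    qed
    have fin: "\<And>i. i \<in> {1..n} \<Longrightarrow> \<exists>c. snd (f i) = ereal c" using fi nz valf by auto
    have f2: "\<forall>i\<in>{0..n}. snd (f i) \<noteq> -\<infinity>"
    proof
      fix i :: nat assume "i \<in> {0..n}"
      note i = this
      show "snd (f i) \<noteq> -\<infinity>"
      proof (cases "i = 0")
        case True then show ?thesis using f0 by simp
      next
        case False
        then have "i \<in> {1..n}" using i by (cases i) auto
        then obtain c where "snd (f i) = ereal c" using fin by blast
        then show ?thesis by simp
      qed
    qed
    have dg: "\<forall>i\<in>{1..n}. val (A i i) = snd (f i)" using fi by simp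
    obtain B where B: "B \<subseteq> {1..n}" "card B = r" "\<mu> B \<noteq> \<infinity>"
      using vm unfolding valuated_matroid_def by blast
    have "\<forall>i\<in>B. snd (f i) \<noteq> \<infinity>" using B(1) fin by fastforce
    then show "proj_n n ` trop {0..n} r (pullback n \<mu> (associated_map n val A)) = trop_act n val A ` trop {1..n} r \<mu>"
      using part1[OF f1 f2 dg offd] B unfolding f_def by blast
  qed
qed


end
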